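(* Let $\mu$ be a positive Borel measure on $\mathbb{R}^d$ such that $\mu(B)>0$ for every ball $B\subset\mathbb{R}^d$. Let $\Omega\subset\mathbb{R}^d$ be a bounded domain, $r:\Omega\to(0,+\infty)$ an admissible radius function in $\Omega$, and $0\leq\alpha<1$. Suppose $u,v\in C(\overline{\Omega})$ satisfy $T_\alpha u=u$ and $T_\alpha v=v$ in $\Omega$, and $u\leq v$ on $\partial\Omega$. Then $u\leq v$ in $\Omega$.
   Context: An admissible radius function in $\Omega$ is $r:\Omega\to(0,\infty)$ with $0<r(x)\leq\operatorname{dist}(x,\partial\Omega)$; $B_x=B(x,r(x))$ (open ball). For $x\in\Omega$: $Su(x)=\frac12(\sup_{B_x}u+\inf_{B_x}u)$, $Mu(x)=\frac{1}{\mu(B_x)}\int_{B_x}u\,d\mu$ (the measure $\mu$ is implicitly assumed finite on balls so that these averages are defined), and $T_\alpha=\alpha S+(1-\alpha)M$. *)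

theory Defs
  imports "HOL-Analysis.Analysis"
begin

definition admissible_radius :: "'a::euclidean_space set \<Rightarrow> ('a \<Rightarrow> real) \<Rightarrow> bool" where
  "admissible_radius \<Omega> r \<longleftrightarrow> (\<forall>x\<in>\<Omega>. 0 < r x \<and> r x \<le> infdist x (frontier \<Omega>))"

definition S_op :: "('a::euclidean_space \<Rightarrow> real) \<Rightarrow> ('a \<Rightarrow> real) \<Rightarrow> 'a \<Rightarrow> real" where
  "S_op r u x = (Sup (u ` ball x (r x)) + Inf (u ` ball x (r x))) / 2"

definition M_op :: "'a::euclidean_space measure \<Rightarrow> ('a \<Rightarrow> real) \<Rightarrow> ('a \<Rightarrow> real) \<Rightarrow> 'a \<Rightarrow> real" where
  "M_op \<mu> r u x = (LINT y:ball x (r x)|\<mu>. u y) / measure \<mu> (ball x (r x))"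

definition T_op :: "real \<Rightarrow> 'a::euclidean_space measure \<Rightarrow> ('a \<Rightarrow> real) \<Rightarrow> ('a \<Rightarrow> real) \<Rightarrow> 'a \<Rightarrow> real" where
  "T_op \<alpha> \<mu> r u x = \<alpha> * S_op r u x + (1 - \<alpha>) * M_op \<mu> r u x"

end

theory Submission imports Defs begin

lemma ball_sub:
  fixes \<Omega> :: "'a::euclidean_space set"
  assumes "open \<Omega>" "frontier \<Omega> \<noteq> {}" "x \<in> \<Omega>" "e \<le> infdist x (frontier \<Omega>)"
  shows "ball x e \<subseteq> \<Omega>"
proof
  fix y assume y: "y \<in> ball x e"
  show "y \<in> \<Omega>"
  proof (rule ccontr)
    assume ny: "y \<notin> \<Omega>"
    have "closed_segment x y \<inter> frontier \<Omega> \<noteq> {}"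
      apply (rule connected_Int_frontier)
      using assms(3) ny by auto
    then obtain z where z: "z \<in> closed_segment x y" "z \<in> frontier \<Omega>" by auto
    have "dist z x \<le> dist x y" using dist_in_closed_segment[OF z(1)] by auto
    moreover have "infdist x (frontier \<Omega>) \<le> dist x z" using infdist_le[OF z(2)] .
    ultimately show False using y assms(4) by (simp add: dist_commute)
  qed
qed

lemma set_int:
  fixes f :: "'a::euclidean_space \<Rightarrow> real"
  assumes sb: "sets \<mu> = sets borel" and "open B" and fin: "emeasure \<mu> B < \<infinity>"
    and c: "continuous_on B f" and K: "\<And>y. y \<in> B \<Longrightarrow> \<bar>f y\<bar> \<le> K"
  shows "set_integrable \<mu> B f"
proof -
  have Bs: "B \<in> sets \<mu>" using sb assms(2) by auto
  have "integrable \<mu> (\<lambda>x. K * indicator B x)"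
    using fin Bs by (intro integrable_mult_right) (auto simp: less_top)
  moreover have "(\<lambda>x. indicator B x *\<^sub>R f x) \<in> borel_measurable \<mu>"
    using borel_measurable_continuous_on_indicator[OF _ c] assms(2)
    by (simp add: measurable_cong_sets[OF sb refl])
  ultimately show ?thesis unfolding set_integrable_def
    apply (rule Bochner_Integration.integrable_bound)
    using K by (auto simp: indicator_def intro!: AE_I2 order_trans[OF _ abs_ge_self])
qed

lemma avg:
  fixes w :: "'a::euclidean_space \<Rightarrow> real"
  assumes sb: "sets \<mu> = sets borel" and B: "open B" and fin: "emeasure \<mu> B < \<infinity>"
    and pos: "\<And>x e. 0 < e \<Longrightarrow> 0 < emeasure \<mu> (ball x e)"
    and c: "continuous_on B w" and si: "set_integrable \<mu> B w"
    and le: "\<And>y. y \<in> B \<Longrightarrow> w y \<le> M"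
    and ge: "M * measure \<mu> B \<le> (LINT y:B|\<mu>. w y)"
  shows "\<And>y. y \<in> B \<Longrightarrow> w y = M"
proof -
  have Bs: "B \<in> sets \<mu>" using sb B by auto
  have sc: "set_integrable \<mu> B (\<lambda>y. M)"
    using fin Bs unfolding set_integrable_def
    by (simp add: less_top mult.commute[of _ M])
  have sg: "set_integrable \<mu> B (\<lambda>y. M - w y)" using set_integral_diff(1)[OF sc si] .
  have "(LINT y:B|\<mu>. M - w y) = measure \<mu> B *\<^sub>R M - (LINT y:B|\<mu>. w y)"
    using set_integral_diff(2)[OF sc si] set_integral_const[OF Bs, of M] fin by (auto simp: less_top)
  also have "\<dots> \<le> 0" using ge by (simp add: mult.commute)
  finally have i0: "(LINT y:B|\<mu>. M - w y) \<le> 0" .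
  have nn: "AE x in \<mu>. 0 \<le> indicator B x *\<^sub>R (M - w x)"
    using le by (intro AE_I2) (auto simp: indicator_def)
  have "0 \<le> (LINT y:B|\<mu>. M - w y)" unfolding set_lebesgue_integral_def
    using nn by (intro integral_nonneg_AE) auto
  with i0 have "(LINT y:B|\<mu>. M - w y) = 0" by auto
  hence AE0: "AE x in \<mu>. indicator B x *\<^sub>R (M - w x) = 0"
    using integral_nonneg_eq_0_iff_AE[OF sg[unfolded set_integrable_def] nn]
    unfolding set_lebesgue_integral_def by auto
  fix y assume y: "y \<in> B"
  show "w y = M"
  proof (rule ccontr)
    assume "w y \<noteq> M"
    hence lt: "w y < M" using le y by force
    have op: "open (B \<inter> w -` {..<M})"
      using continuous_open_preimage[OF c B] by auto
    have "y \<in> B \<inter> w -` {..<M}" using y lt by auto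
    then obtain e where e: "e > 0" "ball y e \<subseteq> B \<inter> w -` {..<M}"
      using op open_contains_ball by blast
    from AE0 obtain N where N: "{x \<in> space \<mu>. \<not> indicator B x *\<^sub>R (M - w x) = 0} \<subseteq> N"
      "emeasure \<mu> N = 0" "N \<in> sets \<mu>" by (rule AE_E)
    have sp: "space \<mu> = UNIV" using sets_eq_imp_space_eq[OF sb] by simp
    have "ball y e \<subseteq> N" using e N(1) sp by (auto simp: indicator_def)
    hence "emeasure \<mu> (ball y e) \<le> emeasure \<mu> N" using N(3) by (intro emeasure_mono) auto
    with N(2) pos[OF e(1), of y] show False by simp
  qed
qed

theorem proposition4p1:
  fixes \<mu> :: "'a::euclidean_space measure"
    and \<Omega> :: "'a set"
    and r :: "'a \<Rightarrow> real"
    and \<alpha> :: real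
    and u v :: "'a \<Rightarrow> real"
  assumes borel: "sets \<mu> = sets borel"
    and finite_balls: "\<And>x e. emeasure \<mu> (ball x e) < \<infinity>"
    and pos_balls: "\<And>x e. 0 < e \<Longrightarrow> 0 < emeasure \<mu> (ball x e)"
    and dom_open: "open \<Omega>" and dom_conn: "connected \<Omega>" and dom_ne: "\<Omega> \<noteq> {}"
    and dom_bdd: "bounded \<Omega>"
    and adm: "admissible_radius \<Omega> r"
    and \<alpha>: "0 \<le> \<alpha>" "\<alpha> < 1"
    and cu: "continuous_on (closure \<Omega>) u"
    and cv: "continuous_on (closure \<Omega>) v"
    and fu: "\<And>x. x \<in> \<Omega> \<Longrightarrow> T_op \<alpha> \<mu> r u x = u x"
    and fv: "\<And>x. x \<in> \<Omega> \<Longrightarrow> T_op \<alpha> \<mu> r v x = v x"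
    and bd: "\<And>x. x \<in> frontier \<Omega> \<Longrightarrow> u x \<le> v x"
  shows "\<forall>x\<in>\<Omega>. u x \<le> v x"
proof (rule ccontr)
  assume "\<not> (\<forall>x\<in>\<Omega>. u x \<le> v x)"
  then obtain x1 where x1: "x1 \<in> \<Omega>" "u x1 > v x1" by force
  define w where "w = (\<lambda>x. u x - v x)"
  have cw: "continuous_on (closure \<Omega>) w" unfolding w_def using cu cv by (intro continuous_intros)
  have "\<Omega> \<noteq> UNIV" using dom_bdd not_bounded_UNIV by auto
  hence fne: "frontier \<Omega> \<noteq> {}" using dom_ne frontier_eq_empty by blast
  have rpos: "\<And>x. x \<in> \<Omega> \<Longrightarrow> 0 < r x" using adm unfolding admissible_radius_def by auto
  have bsub: "\<And>x. x \<in> \<Omega> \<Longrightarrow> ball x (r x) \<subseteq> \<Omega>"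
    using adm ball_sub[OF dom_open fne] unfolding admissible_radius_def by auto
  have cpt: "compact (closure \<Omega>)" using dom_bdd by (simp add: compact_closure)
  obtain x0 where x0: "x0 \<in> closure \<Omega>" "\<And>y. y \<in> closure \<Omega> \<Longrightarrow> w y \<le> w x0"
    using continuous_attains_sup[OF cpt _ cw] dom_ne by auto
  define M where "M = w x0"
  have Mpos: "M > 0" using x0(2)[of x1] x1 closure_subset unfolding M_def w_def by force
  have x0O: "x0 \<in> \<Omega>"
  proof (rule ccontr)
    assume "x0 \<notin> \<Omega>"
    hence "x0 \<in> frontier \<Omega>" using x0(1) dom_open by (simp add: frontier_def interior_open)
    thus False using bd[of x0] Mpos unfolding M_def w_def by auto
  qed
  obtain Ku where Ku: "\<And>y. y \<in> closure \<Omega> \<Longrightarrow> \<bar>u y\<bar> \<le> Ku"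
    using compact_imp_bounded[OF compact_continuous_image[OF cu cpt]]
    unfolding bounded_iff by (auto simp: real_norm_def)
  obtain Kv where Kv: "\<And>y. y \<in> closure \<Omega> \<Longrightarrow> \<bar>v y\<bar> \<le> Kv"
    using compact_imp_bounded[OF compact_continuous_image[OF cv cpt]]
    unfolding bounded_iff by (auto simp: real_norm_def)
  have wle: "\<And>y. y \<in> closure \<Omega> \<Longrightarrow> w y \<le> M" using x0(2) M_def by auto
  have key: "\<And>x y. x \<in> \<Omega> \<Longrightarrow> w x = M \<Longrightarrow> y \<in> ball x (r x) \<Longrightarrow> w y = M"
  proof -
    fix x y assume x: "x \<in> \<Omega>" and wx: "w x = M" and y: "y \<in> ball x (r x)"
    define B where "B = ball x (r x)"
    have BO: "B \<subseteq> closure \<Omega>" using bsub[OF x] closure_subset unfolding B_def by auto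
    have Bne: "B \<noteq> {}" using rpos[OF x] unfolding B_def by auto
    have bu1: "bdd_above (u ` B)" unfolding bdd_above_def
      by (rule exI[of _ Ku]) (use Ku BO in \<open>force dest: abs_le_D1\<close>)
    have bu2: "bdd_below (u ` B)" unfolding bdd_below_def
      by (rule exI[of _ "-Ku"]) (use Ku BO in \<open>force dest: abs_le_D2\<close>)
    note bu = bu1 bu2
    have bv1: "bdd_above (v ` B)" unfolding bdd_above_def
      by (rule exI[of _ Kv]) (use Kv BO in \<open>force dest: abs_le_D1\<close>)
    have bv2: "bdd_below (v ` B)" unfolding bdd_below_def
      by (rule exI[of _ "-Kv"]) (use Kv BO in \<open>force dest: abs_le_D2\<close>)
    note bv = bv1 bv2
    have wB: "\<And>y. y \<in> B \<Longrightarrow> u y \<le> v y + M" using wle BO unfolding w_def by force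
    have s1: "Sup (u ` B) \<le> Sup (v ` B) + M"
    proof (rule cSup_least)
      show "u ` B \<noteq> {}" using Bne by auto
      fix t assume "t \<in> u ` B"
      then obtain y where "y \<in> B" "t = u y" by auto
      thus "t \<le> Sup (v ` B) + M" using wB[of y] cSup_upper[OF _ bv(1), of "v y"] by auto
    qed
    have s2: "Inf (u ` B) - M \<le> Inf (v ` B)"
    proof (rule cInf_greatest)
      show "v ` B \<noteq> {}" using Bne by auto
      fix t assume "t \<in> v ` B"
      then obtain y where "y \<in> B" "t = v y" by auto
      thus "Inf (u ` B) - M \<le> t" using wB[of y] cInf_lower[OF _ bu(2), of "u y"] by auto
    qed
    have S: "S_op r u x - S_op r v x \<le> M" using s1 s2 unfolding S_op_def B_def by (simp add: field_simps)
    have eq: "w x = \<alpha> * (S_op r u x - S_op r v x) + (1 - \<alpha>) * (M_op \<mu> r u x - M_op \<mu> r v x)"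
      using fu[OF x] fv[OF x] unfolding w_def T_op_def by (simp add: algebra_simps)
    have "\<alpha> * (S_op r u x - S_op r v x) \<le> \<alpha> * M" using S \<alpha> by (simp add: mult_left_mono)
    hence "(1 - \<alpha>) * M \<le> (1 - \<alpha>) * (M_op \<mu> r u x - M_op \<mu> r v x)" using eq wx by (simp add: algebra_simps)
    hence MM: "M \<le> M_op \<mu> r u x - M_op \<mu> r v x" using \<alpha> by simp
    have Bopen: "open B" unfolding B_def by simp
    have fin: "emeasure \<mu> B < \<infinity>" unfolding B_def by (rule finite_balls)
    have mpos: "measure \<mu> B > 0"
      using pos_balls[OF rpos[OF x], of x] fin emeasure_eq_ennreal_measure[of \<mu> B]
      unfolding B_def by (auto simp: ennreal_less_zero_iff less_top)
    have cuB: "continuous_on B u" using continuous_on_subset[OF cu BO] .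
    have cvB: "continuous_on B v" using continuous_on_subset[OF cv BO] .
    have iu: "set_integrable \<mu> B u" using set_int[OF borel Bopen fin cuB, of Ku] Ku BO by auto
    have iv: "set_integrable \<mu> B v" using set_int[OF borel Bopen fin cvB, of Kv] Kv BO by auto
    have iw: "set_integrable \<mu> B w" unfolding w_def using set_integral_diff(1)[OF iu iv] .
    have "M_op \<mu> r u x - M_op \<mu> r v x = (LINT y:B|\<mu>. w y) / measure \<mu> B"
      unfolding M_op_def w_def B_def[symmetric] using set_integral_diff(2)[OF iu iv]
      by (simp add: diff_divide_distrib)
    with MM mpos have ge: "M * measure \<mu> B \<le> (LINT y:B|\<mu>. w y)"
      by (simp add: pos_le_divide_eq)
    have cwB: "continuous_on B w" using continuous_on_subset[OF cw BO] .
    show "w y = M"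
      by (rule avg[OF borel Bopen fin pos_balls cwB iw _ ge]) (use wle BO y B_def in auto)
  qed
  define A where "A = {x \<in> \<Omega>. w x = M}"
  have "open A" unfolding open_contains_ball
  proof
    fix x assume "x \<in> A"
    hence x: "x \<in> \<Omega>" "w x = M" unfolding A_def by auto
    show "\<exists>e>0. ball x e \<subseteq> A"
      using rpos[OF x(1)] key[OF x] bsub[OF x(1)] unfolding A_def by auto
  qed
  hence oA: "openin (top_of_set \<Omega>) A" unfolding A_def by (auto intro: open_subset)
  have cwO: "continuous_on \<Omega> w" using continuous_on_subset[OF cw closure_subset] .
  have "closedin (top_of_set \<Omega>) (\<Omega> \<inter> w -` {M})"
    using continuous_closedin_preimage[OF cwO] by auto
  hence cA: "closedin (top_of_set \<Omega>) A" unfolding A_def by (simp add: vimage_def Int_def)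
  have "A \<noteq> {}" using x0O unfolding A_def M_def by auto
  hence AO: "A = \<Omega>" using dom_conn oA cA unfolding connected_clopen by blast
  obtain z where z: "z \<in> frontier \<Omega>" using fne by auto
  hence "z \<in> closure \<Omega>" by (simp add: frontier_def)
  hence "w z = M" using continuous_constant_on_closure[OF cw, of M] AO unfolding A_def by auto
  thus False using bd[OF z] Mpos unfolding w_def by auto
qed

end
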